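(* Let $\mathcal{M}=(\mathbf A,\perp,\{\mathsf{t},\mathsf{f}\})$ be an $\mathfrak{N}_w$-model and let $x,y$ be distinct propositional variables. Then $h((x\Rightarrow y)\Rightarrow(y\Rightarrow x))\perp\mathsf{f}$ for every homomorphism $h$ from the formula algebra into $\mathbf A$ if and only if $\mathbf A$ is trivial (has exactly one element).
   Context: Formulas are built from variables using binary $\otimes,\circ$ and unary ${}^{*}$; in formulas and algebras, $\varphi\Rightarrow\psi:=(\varphi\circ\psi^{*})^{*}$, $\varphi\Leftrightarrow\psi:=(\varphi\Rightarrow\psi)\otimes(\psi\Rightarrow\varphi)$, $\varphi\not\Leftrightarrow\psi:=(\varphi\Leftrightarrow\psi)^{*}$, $\varphi\not\Leftrightarrow\psi\not\Leftrightarrow\chi:=((\varphi\not\Leftrightarrow\psi)\otimes(\varphi\not\Leftrightarrow\chi))\otimes(\psi\not\Leftrightarrow\chi)$. A weak $\mathcal{N}$-algebra is an algebra $(A,\otimes,\circ,{}^{*})$ of type $(2,2,1)$ with $\otimes,\circ$ commutative, $x^{**}=x$, and $(x\otimes y)\circ z=(x\otimes z)\circ y$. With $\mathsf{t}\ne\mathsf{f}$ symbols not in $A$, $\overline A=A\cup\{\mathsf{t},\mathsf{f}\}$, an $\mathfrak{N}_w$-model is $(\mathbf A,\perp,\{\mathsf{t},\mathsf{f}\})$, $\mathbf A$ a weak $\mathcal{N}$-algebra, $\perp\subseteq\overline A\times\overline A$, such that for all $x,y,z\in A$: (a) $x\perp x^{*}$; (b) $x\perp y^{*}$ and $y\perp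 x^{*}$ imply $x=y$; (c) $x\perp y$ iff $x\circ y\perp\mathsf{t}$; (d) $x\perp\mathsf{t}$ iff $x^{*}\perp\mathsf{f}$; (e) $x\perp\mathsf{f}$ and $y\perp\mathsf{f}$ iff $x\otimes y\perp\mathsf{f}$; (f) $(x\circ y^{*})^{*}\perp(x\circ y)^{*}$; (g) $x\perp y$ and $x\perp\mathsf{f}$ imply $y\perp\mathsf{t}$; (h) $(x\not\Leftrightarrow y\not\Leftrightarrow z)\perp((x\Rightarrow y)\Rightarrow((y\Rightarrow z)\Rightarrow(x\Rightarrow z)))^{*}$. *)

theory Defs
  imports Main
begin

datatype 'a ext = Elem 'a | T | F

datatype 'v form =
    Var 'v
  | FOtimes "'v form" "'v form"
  | FCirc "'v form" "'v form"
  | FStar "'v form"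

definition fimp :: "'v form \<Rightarrow> 'v form \<Rightarrow> 'v form" where
  "fimp p q = FStar (FCirc p (FStar q))"

definition aimp :: "('a \<Rightarrow> 'a \<Rightarrow> 'a) \<Rightarrow> ('a \<Rightarrow> 'a) \<Rightarrow> 'a \<Rightarrow> 'a \<Rightarrow> 'a" where
  "aimp cc st x y = st (cc x (st y))"

definition aiff :: "('a \<Rightarrow> 'a \<Rightarrow> 'a) \<Rightarrow> ('a \<Rightarrow> 'a \<Rightarrow> 'a) \<Rightarrow> ('a \<Rightarrow> 'a) \<Rightarrow> 'a \<Rightarrow> 'a \<Rightarrow> 'a" where
  "aiff ot cc st x y = ot (aimp cc st x y) (aimp cc st y x)"

definition aniff :: "('a \<Rightarrow> 'a \<Rightarrow> 'a) \<Rightarrow> ('a \<Rightarrow> 'a \<Rightarrow> 'a) \<Rightarrow> ('a \<Rightarrow> 'a) \<Rightarrow> 'a \<Rightarrow> 'a \<Rightarrow> 'a" where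
  "aniff ot cc st x y = st (aiff ot cc st x y)"

definition aniff3 :: "('a \<Rightarrow> 'a \<Rightarrow> 'a) \<Rightarrow> ('a \<Rightarrow> 'a \<Rightarrow> 'a) \<Rightarrow> ('a \<Rightarrow> 'a) \<Rightarrow> 'a \<Rightarrow> 'a \<Rightarrow> 'a \<Rightarrow> 'a" where
  "aniff3 ot cc st x y z =
     ot (ot (aniff ot cc st x y) (aniff ot cc st x z)) (aniff ot cc st y z)"

definition weak_N_algebra :: "('a \<Rightarrow> 'a \<Rightarrow> 'a) \<Rightarrow> ('a \<Rightarrow> 'a \<Rightarrow> 'a) \<Rightarrow> ('a \<Rightarrow> 'a) \<Rightarrow> bool" where
  "weak_N_algebra ot cc st \<longleftrightarrow>
     (\<forall>x y. ot x y = ot y x) \<and> (\<forall>x y. cc x y = cc y x) \<and> (\<forall>x. st (st x) = x) \<and>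
     (\<forall>x y z. cc (ot x y) z = cc (ot x z) y)"

definition Nw_model :: "('a \<Rightarrow> 'a \<Rightarrow> 'a) \<Rightarrow> ('a \<Rightarrow> 'a \<Rightarrow> 'a) \<Rightarrow> ('a \<Rightarrow> 'a)
    \<Rightarrow> ('a ext \<Rightarrow> 'a ext \<Rightarrow> bool) \<Rightarrow> bool" where
  "Nw_model ot cc st perp \<longleftrightarrow> weak_N_algebra ot cc st \<and>
     (\<forall>x. perp (Elem x) (Elem (st x))) \<and>
     (\<forall>x y. perp (Elem x) (Elem (st y)) \<and> perp (Elem y) (Elem (st x)) \<longrightarrow> x = y) \<and>
     (\<forall>x y. perp (Elem x) (Elem y) \<longleftrightarrow> perp (Elem (cc x y)) T) \<and>
     (\<forall>x. perp (Elem x) T \<longleftrightarrow> perp (Elem (st x)) F) \<and>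
     (\<forall>x y. (perp (Elem x) F \<and> perp (Elem y) F) \<longleftrightarrow> perp (Elem (ot x y)) F) \<and>
     (\<forall>x y. perp (Elem (st (cc x (st y)))) (Elem (st (cc x y)))) \<and>
     (\<forall>x y. perp (Elem x) (Elem y) \<and> perp (Elem x) F \<longrightarrow> perp (Elem y) T) \<and>
     (\<forall>x y z. perp (Elem (aniff3 ot cc st x y z))
        (Elem (st (aimp cc st (aimp cc st x y)
                    (aimp cc st (aimp cc st y z) (aimp cc st x z))))))"

definition is_hom :: "('a \<Rightarrow> 'a \<Rightarrow> 'a) \<Rightarrow> ('a \<Rightarrow> 'a \<Rightarrow> 'a) \<Rightarrow> ('a \<Rightarrow> 'a)
    \<Rightarrow> ('v form \<Rightarrow> 'a) \<Rightarrow> bool" where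
  "is_hom ot cc st h \<longleftrightarrow>
     (\<forall>p q. h (FOtimes p q) = ot (h p) (h q)) \<and>
     (\<forall>p q. h (FCirc p q) = cc (h p) (h q)) \<and>
     (\<forall>p. h (FStar p) = st (h p))"

end

theory Submission
  imports Defs
begin

lemma core:
  fixes ot cc :: "'a \<Rightarrow> 'a \<Rightarrow> 'a" and st :: "'a \<Rightarrow> 'a" and perp :: "'a ext \<Rightarrow> 'a ext \<Rightarrow> bool" and u v :: 'a
  assumes c1: "\<And>x y. ot x y = ot y x" and c2: "\<And>x y. cc x y = cc y x" and inv: "\<And>x. st (st x) = x"
  and wn: "\<And>x y z. cc (ot x y) z = cc (ot x z) y"
  and a: "\<And>x. perp (Elem x) (Elem (st x))"
  and b: "\<And>x y. perp (Elem x) (Elem (st y)) \<Longrightarrow> perp (Elem y) (Elem (st x)) \<Longrightarrow> x = y"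
  and c: "\<And>x y. perp (Elem x) (Elem y) \<longleftrightarrow> perp (Elem (cc x y)) T"
  and d: "\<And>x. perp (Elem x) T \<longleftrightarrow> perp (Elem (st x)) F"
  and e: "\<And>x y. (perp (Elem x) F \<and> perp (Elem y) F) \<longleftrightarrow> perp (Elem (ot x y)) F"
  and f: "\<And>x y. perp (Elem (st (cc x (st y)))) (Elem (st (cc x y)))"
  and g: "\<And>x y. perp (Elem x) (Elem y) \<Longrightarrow> perp (Elem x) F \<Longrightarrow> perp (Elem y) T"
  and sym: "\<And>a b. cc a (st b) = cc b (st a)"
  shows "u = v"
proof -
  have psym: "perp (Elem y) (Elem x)" if "perp (Elem x) (Elem y)" for x y
    using c[of x y] c[of y x] c2[of x y] that by simp
  have d2: "perp (Elem (st x)) T \<longleftrightarrow> perp (Elem x) F" for x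
    using d[of "st x"] inv[of x] by simp
  have l229: "perp (Elem x) (Elem (st y))" if "perp (Elem (st x)) (Elem y)" for x y
    using that c[of "st x" y] c[of x "st y"] sym[of x y] c2[of y "st x"] by simp
  have l263: "perp (Elem (st x)) (Elem (st y))" if "perp (Elem x) (Elem y)" for x y
    using l229[of "st x" y] that inv[of x] by simp
  have l98: "perp (Elem (st (cc x y))) (Elem (st (cc y (st x))))" for x y
    using f[of y "st x"] inv[of x] c2[of x y] by simp
  have l285: "perp (Elem (cc x (st y))) (Elem (cc y x))" for x y
    using l229[OF f[of x y]] inv[of "cc x y"] c2[of y x] by simp
  have l327: "cc x (st y) = st (cc y x)" for x y
  proof (rule b)
    show "perp (Elem (cc x (st y))) (Elem (st (st (cc y x))))" using l285[of x y] inv[of "cc y x"] by simp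
    show "perp (Elem (st (cc y x))) (Elem (st (cc x (st y))))"
      using l98[of y x] by simp
  qed
  have l497: "perp (Elem x) (Elem (st y))" if "perp (Elem (cc x y)) F" for x y
    using that c[of x "st y"] d2[of "cc y x"] l327[of x y] c2[of x y] by simp
  have l514: "perp (Elem (cc x y)) F" if "perp (Elem x) (Elem (st y))" for x y
    using that c[of x "st y"] d2[of "cc y x"] l327[of x y] c2[of x y] by simp
  have l584: "perp (Elem (cc x x)) F" for x
    using l514[of x x] a[of x] by simp
  have l626: "perp (Elem (cc x (ot y (ot y x)))) F" for x y
    using l584[of "ot y x"] wn[of y x "ot y x"] c2[of "ot y (ot y x)" x] by simp
  have l670: "perp (Elem (st x)) (Elem y)" if "perp (Elem (cc x y)) F" for x y
    using that l497[of y x] c2[of x y] psym[of y "st x"] by simp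
  have l1383: "perp (Elem (st x)) (Elem (ot y (ot y x)))" for x y
    using l670[OF l626[of x y]] .
  have l496: "st x = y" if "perp (Elem x) (Elem y)" for x y
  proof -
    have "st x = y"
    proof (rule b)
      show "perp (Elem (st x)) (Elem (st y))" using l263[OF that] .
      show "perp (Elem y) (Elem (st (st x)))" using psym[OF that] inv[of x] by simp
    qed
    then show ?thesis .
  qed
  have l1939: "ot y (ot y x) = x" for x y
    using l496[OF l1383[of x y]] inv[of x] by simp
  have allf: "perp (Elem z) F" for z
    using e[of z "ot z (cc u u)"] l1939[of z "cc u u"] l584[of u] by simp
  have allp: "perp (Elem x) (Elem y)" for x y
    using l497[OF allf[of "cc x (st y)"]] inv[of y] by simp
  show ?thesis using b[of u v] allp by simp
qed

primrec evf :: "('a \<Rightarrow> 'a \<Rightarrow> 'a) \<Rightarrow> ('a \<Rightarrow> 'a \<Rightarrow> 'a) \<Rightarrow> ('a \<Rightarrow> 'a) \<Rightarrow> ('v \<Rightarrow> 'a) \<Rightarrow> 'v form \<Rightarrow> 'a" where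
  "evf ot cc st val (Var v) = val v"
| "evf ot cc st val (FOtimes p q) = ot (evf ot cc st val p) (evf ot cc st val q)"
| "evf ot cc st val (FCirc p q) = cc (evf ot cc st val p) (evf ot cc st val q)"
| "evf ot cc st val (FStar p) = st (evf ot cc st val p)"

lemma evf_hom: "is_hom ot cc st (evf ot cc st val)"
  unfolding is_hom_def by simp

theorem proposition4p13:
  fixes ot cc :: "'a \<Rightarrow> 'a \<Rightarrow> 'a" and st :: "'a \<Rightarrow> 'a"
    and perp :: "'a ext \<Rightarrow> 'a ext \<Rightarrow> bool" and x y :: 'v
  assumes "Nw_model ot cc st perp"
    and "x \<noteq> y"
  shows "(\<forall>h :: 'v form \<Rightarrow> 'a. is_hom ot cc st h \<longrightarrow>
            perp (Elem (h (fimp (fimp (Var x) (Var y)) (fimp (Var y) (Var x))))) F)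
         \<longleftrightarrow> (\<exists>a :: 'a. \<forall>b. b = a)"
proof -
  note M = assms(1)[unfolded Nw_model_def weak_N_algebra_def]
  have c1: "\<And>x y. ot x y = ot y x"
    using M[THEN conjunct1, THEN conjunct1] by blast
  have c2: "\<And>x y. cc x y = cc y x"
    using M[THEN conjunct1, THEN conjunct2, THEN conjunct1] by blast
  have inv: "\<And>x. st (st x) = x"
    using M[THEN conjunct1, THEN conjunct2, THEN conjunct2, THEN conjunct1] by blast
  have wn: "\<And>x y z. cc (ot x y) z = cc (ot x z) y"
    using M[THEN conjunct1, THEN conjunct2, THEN conjunct2, THEN conjunct2] by blast
  have a: "\<And>x. perp (Elem x) (Elem (st x))"
    using M[THEN conjunct2, THEN conjunct1] by blast
  have b: "\<And>x y. perp (Elem x) (Elem (st y)) \<Longrightarrow> perp (Elem y) (Elem (st x)) \<Longrightarrow> x = y"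
    using M[THEN conjunct2, THEN conjunct2, THEN conjunct1] by blast
  have c: "\<And>x y. perp (Elem x) (Elem y) \<longleftrightarrow> perp (Elem (cc x y)) T"
    using M[THEN conjunct2, THEN conjunct2, THEN conjunct2, THEN conjunct1] by blast
  have d: "\<And>x. perp (Elem x) T \<longleftrightarrow> perp (Elem (st x)) F"
    using M[THEN conjunct2, THEN conjunct2, THEN conjunct2, THEN conjunct2, THEN conjunct1] by blast
  have e: "\<And>x y. (perp (Elem x) F \<and> perp (Elem y) F) \<longleftrightarrow> perp (Elem (ot x y)) F"
    using M[THEN conjunct2, THEN conjunct2, THEN conjunct2, THEN conjunct2, THEN conjunct2, THEN conjunct1] by blast
  have f: "\<And>x y. perp (Elem (st (cc x (st y)))) (Elem (st (cc x y)))"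
    using M[THEN conjunct2, THEN conjunct2, THEN conjunct2, THEN conjunct2, THEN conjunct2, THEN conjunct2, THEN conjunct1] by blast
  have g: "\<And>x y. perp (Elem x) (Elem y) \<Longrightarrow> perp (Elem x) F \<Longrightarrow> perp (Elem y) T"
    using M[THEN conjunct2, THEN conjunct2, THEN conjunct2, THEN conjunct2, THEN conjunct2, THEN conjunct2, THEN conjunct2, THEN conjunct1] by blast
  show ?thesis
  proof
    assume H: "\<forall>h :: 'v form \<Rightarrow> 'a. is_hom ot cc st h \<longrightarrow>
            perp (Elem (h (fimp (fimp (Var x) (Var y)) (fimp (Var y) (Var x))))) F"
    have P: "perp (Elem (st (cc a (st b)))) (Elem (st (st (cc b (st a)))))" for a b
    proof -
      define val where "val = (\<lambda>v. if v = x then a else b)"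
      have "perp (Elem (evf ot cc st val (fimp (fimp (Var x) (Var y)) (fimp (Var y) (Var x))))) F"
        using H evf_hom by blast
      then have "perp (Elem (st (cc (st (cc a (st b))) (st (st (cc b (st a))))))) F"
        using assms(2) by (simp add: fimp_def val_def)
      then have "perp (Elem (cc (st (cc a (st b))) (st (st (cc b (st a)))))) T"
        using d inv by metis
      then show ?thesis using c by blast
    qed
    have sym: "cc a (st b) = cc b (st a)" for a b
    proof -
      have "st (cc a (st b)) = st (cc b (st a))"
        using b[OF P[of a b] P[of b a]] .
      then show ?thesis using inv by metis
    qed
    fix u :: 'a
    have "v = u" for v
      apply (rule core[where ot=ot and cc=cc and st=st and perp=perp])
                 apply (fact c1)
                apply (fact c2)
               apply (fact inv)
              apply (fact wn)
             apply (fact a)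
            apply (fact b)
           apply (fact c)
          apply (fact d)
         apply (fact e)
        apply (fact f)
       apply (fact g)
      apply (fact sym)
      done
    then show "\<exists>a :: 'a. \<forall>b. b = a" by blast
  next
    assume "\<exists>a :: 'a. \<forall>b. b = a"
    then obtain a0 :: 'a where A: "\<And>b. b = a0" by blast
    have "perp (Elem z) F" for z
    proof -
      have "perp (Elem a0) (Elem a0)" using a[of a0] A[of "st a0"] by simp
      then have "perp (Elem a0) T" using c[of a0 a0] A[of "cc a0 a0"] by simp
      then have "perp (Elem a0) F" using d[of a0] A[of "st a0"] by simp
      then show ?thesis using A[of z] by simp
    qed
    then show "\<forall>h :: 'v form \<Rightarrow> 'a. is_hom ot cc st h \<longrightarrow>
            perp (Elem (h (fimp (fimp (Var x) (Var y)) (fimp (Var y) (Var x))))) F" by blast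
  qed
qed

end
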